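(* Let $\lambda$ be a singular cardinal of cofinality $\kappa$ and $\vec\lambda=\langle\lambda_i:i<\kappa\rangle$ a strictly increasing sequence of regular cardinals converging to $\lambda$. Then $\mathbb G(\vec\lambda)$ is $\kappa^+$-directed closed.
   Context: For $f,g:\kappa\to\mathrm{ON}$, $f<^*g$ means there is $j<\kappa$ with $f(i)<g(i)$ for all $i\ge j$. Given a $<^*$-increasing sequence $\langle f_\gamma:\gamma<\beta\rangle$ in $\prod_{i<\kappa}\lambda_i$, $\beta$ is a good point if there are an unbounded $A\subseteq\beta$ of order type $\mathrm{cf}(\beta)$ and $j<\kappa$ such that for all $i\ge j$, $\langle f_\gamma(i):\gamma\in A\rangle$ is strictly increasing. $\mathbb G(\vec\lambda)$ consists of sequences $\langle f_\beta:\beta\le\alpha\rangle$ with $\alpha<\lambda^+$ such that for all $\beta\le\alpha$: $f_\beta\in\prod_{i<\kappa}\lambda_i$; $f_\gamma<^*f_\beta$ for all $\gamma<\beta$; and if $\mathrm{cf}(\beta)>\kappa$ then $\beta$ is a good point of $\langle f_\gamma:\gamma<\beta\rangle$. The order is end-extension: $p\le q$ iff $p\upharpoonright\mathrm{dom}(q)=q$. *)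

theory Defs
  imports Main "HOL-Library.Equipollence" "HOL-Library.FuncSet"
begin

text \<open>Ordinals are represented by the elements of a well-ordered type 'o
  (every such type is order-isomorphic to an ordinal); the ordinal x is
  identified with its set of predecessors.\<close>

definition below :: "'o::wellorder \<Rightarrow> 'o set" where
  "below x = {y. y < x}"

definition ordertype_is :: "'o::wellorder set \<Rightarrow> 'o \<Rightarrow> bool" where
  "ordertype_is A g \<longleftrightarrow> (\<exists>f. bij_betw f (below g) A \<and> strict_mono_on (below g) f)"

definition unbounded_in :: "'o::wellorder set \<Rightarrow> 'o \<Rightarrow> bool" where
  "unbounded_in A b \<longleftrightarrow> A \<subseteq> below b \<and> (\<forall>x<b. \<exists>a\<in>A. x \<le> a)"

definition cf :: "'o::wellorder \<Rightarrow> 'o" where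
  "cf b = (LEAST g. \<exists>A. unbounded_in A b \<and> ordertype_is A g)"

definition is_cardinal :: "'o::wellorder \<Rightarrow> bool" where
  "is_cardinal x \<longleftrightarrow> (\<forall>y<x. below y \<prec> below x)"

definition regular_cardinal :: "'o::wellorder \<Rightarrow> bool" where
  "regular_cardinal x \<longleftrightarrow> is_cardinal x \<and> infinite (below x) \<and> cf x = x"

definition singular_cardinal :: "'o::wellorder \<Rightarrow> bool" where
  "singular_cardinal x \<longleftrightarrow> is_cardinal x \<and> infinite (below x) \<and> cf x < x"

definition lt_star :: "'o::wellorder \<Rightarrow> ('o \<Rightarrow> 'o) \<Rightarrow> ('o \<Rightarrow> 'o) \<Rightarrow> bool" where
  "lt_star \<kappa> f g \<longleftrightarrow> (\<exists>j<\<kappa>. \<forall>i. j \<le> i \<and> i < \<kappa> \<longrightarrow> f i < g i)"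

definition good_point :: "'o::wellorder \<Rightarrow> ('o \<Rightarrow> 'o \<Rightarrow> 'o) \<Rightarrow> 'o \<Rightarrow> bool" where
  "good_point \<kappa> F b \<longleftrightarrow>
     (\<exists>A j. unbounded_in A b \<and> ordertype_is A (cf b) \<and> j < \<kappa> \<and>
        (\<forall>i. j \<le> i \<and> i < \<kappa> \<longrightarrow>
           (\<forall>g\<in>A. \<forall>g'\<in>A. g < g' \<longrightarrow> F g i < F g' i)))"

text \<open>The forcing G(lambda-vector): a condition is a partial map with
  domain {beta. beta \<le> alpha}, alpha < lambda^+ (i.e. |alpha| \<le> lambda).\<close>
definition Gforce :: "'o::wellorder \<Rightarrow> 'o \<Rightarrow> ('o \<Rightarrow> 'o) \<Rightarrow> ('o \<rightharpoonup> ('o \<Rightarrow> 'o)) set" where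
  "Gforce lmb \<kappa> lam =
    {p. \<exists>\<alpha>. below \<alpha> \<lesssim> below lmb \<and> dom p = {\<beta>. \<beta> \<le> \<alpha>} \<and>
        (\<forall>\<beta>\<le>\<alpha>.
           the (p \<beta>) \<in> (\<Pi>\<^sub>E i\<in>below \<kappa>. below (lam i)) \<and>
           (\<forall>\<gamma><\<beta>. lt_star \<kappa> (the (p \<gamma>)) (the (p \<beta>))) \<and>
           (\<kappa> < cf \<beta> \<longrightarrow> good_point \<kappa> (\<lambda>\<gamma>. the (p \<gamma>)) \<beta>))}"

text \<open>Forcing order: p \<le> q iff p end-extends q.\<close>
definition ext_le :: "('o \<rightharpoonup> 'b) \<Rightarrow> ('o \<rightharpoonup> 'b) \<Rightarrow> bool" where
  "ext_le p q \<longleftrightarrow> (p |` dom q) = q"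

text \<open>P is mu-directed closed, with mu = kappa^+: every directed D \<subseteq> P with
  |D| < kappa^+ (i.e. |D| \<le> kappa) has a lower bound in P.\<close>
definition kappa_plus_directed_closed :: "'o::wellorder \<Rightarrow> ('o \<rightharpoonup> 'b) set \<Rightarrow> bool" where
  "kappa_plus_directed_closed \<kappa> P \<longleftrightarrow>
    (\<forall>D. D \<subseteq> P \<and> D \<lesssim> below \<kappa> \<and>
         (\<forall>p\<in>D. \<forall>q\<in>D. \<exists>r\<in>D. ext_le r p \<and> ext_le r q)
       \<longrightarrow> (\<exists>r\<in>P. \<forall>p\<in>D. ext_le r p))"

end

theory Submission imports Defs begin

definition coll :: "'o::wellorder set \<Rightarrow> 'o \<Rightarrow> 'o" where
  "coll X = wfrec {(x,y). x < y} (\<lambda>c x. LEAST z. \<forall>y\<in>X. y < x \<longrightarrow> c y < z)"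

lemma coll_eq: "coll X x = (LEAST z. \<forall>y\<in>X. y < x \<longrightarrow> coll X y < z)"
proof -
  have w: "wf {(x::'a,y). x < y}" by (rule wf)
  show ?thesis
    apply (subst coll_def)
    apply (subst wfrec[OF w])
    apply (simp add: cut_apply coll_def[symmetric])
    done
qed

lemma coll_le: "coll X x \<le> x"
proof (induction x rule: less_induct)
  case (less x)
  show ?case unfolding coll_eq[of X x]
    by (rule Least_le) (use less in force)
qed

lemma coll_gt: "y \<in> X \<Longrightarrow> y < x \<Longrightarrow> coll X y < coll X x"
proof -
  assume a: "y \<in> X" "y < x"
  have "\<forall>y\<in>X. y < x \<longrightarrow> coll X y < coll X x"
    unfolding coll_eq[of X x]
    by (rule LeastI[of _ x]) (use coll_le le_less_trans in blast)
  with a show ?thesis by blast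
qed

lemma coll_down: "z < coll X x \<Longrightarrow> \<exists>y\<in>X. y < x \<and> coll X y = z"
proof (induction x arbitrary: z rule: less_induct)
  case (less x)
  have "\<not> (\<forall>y\<in>X. y < x \<longrightarrow> coll X y < z)"
  proof
    assume "\<forall>y\<in>X. y < x \<longrightarrow> coll X y < z"
    then have "coll X x \<le> z" unfolding coll_eq[of X x] by (rule Least_le)
    with less.prems show False by simp
  qed
  then obtain y where y: "y \<in> X" "y < x" "z \<le> coll X y" by force
  show ?case
  proof (cases "z = coll X y")
    case True then show ?thesis using y by blast
  next
    case False
    then have "z < coll X y" using y by simp
    from less.IH[OF y(2) this] obtain y' where "y' \<in> X" "y' < y" "coll X y' = z" by blast
    then show ?thesis using y using less_trans by blast
  qed
qed

lemma ordertype_exists: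
  assumes X: "X \<subseteq> below k"
  shows "\<exists>g\<le>k. ordertype_is X g"
proof -
  define g where "g = (LEAST z. \<forall>x\<in>X. coll X x < z)"
  have kk: "\<forall>x\<in>X. coll X x < k" using X coll_le unfolding below_def
    using le_less_trans by blast
  then have gk: "g \<le> k" unfolding g_def by (rule Least_le)
  have gX: "\<forall>x\<in>X. coll X x < g" unfolding g_def by (rule LeastI[of _ k]) (rule kk)
  have inj: "inj_on (coll X) X"
    by (rule inj_onI) (metis coll_gt less_irrefl linorder_neqE)
  have img: "coll X ` X = below g"
  proof
    show "coll X ` X \<subseteq> below g" using gX unfolding below_def by blast
  next
    show "below g \<subseteq> coll X ` X"
    proof
      fix z assume "z \<in> below g"
      then have zg: "z < g" by (simp add: below_def)
      have "\<exists>x\<in>X. z \<le> coll X x"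
      proof (rule ccontr)
        assume "\<not> (\<exists>x\<in>X. z \<le> coll X x)"
        then have "\<forall>x\<in>X. coll X x < z" by force
        then have "g \<le> z" unfolding g_def by (rule Least_le)
        with zg show False by simp
      qed
      then obtain x where x: "x \<in> X" "z \<le> coll X x" by blast
      show "z \<in> coll X ` X"
      proof (cases "z = coll X x")
        case True then show ?thesis using x by blast
      next
        case False
        then show ?thesis using x coll_down[of z X x] by force
      qed
    qed
  qed
  have bij: "bij_betw (coll X) X (below g)" using inj img by (simp add: bij_betw_def)
  have "bij_betw (inv_into X (coll X)) (below g) X" by (rule bij_betw_inv_into[OF bij])
  moreover have "strict_mono_on (below g) (inv_into X (coll X))"
  proof (rule strict_mono_onI)
    fix a b assume ab: "a \<in> below g" "b \<in> below g" "a < b"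
    let ?x = "inv_into X (coll X) a" and ?y = "inv_into X (coll X) b"
    have xX: "?x \<in> X" "?y \<in> X" using ab img by (auto intro: inv_into_into)
    have ca: "coll X ?x = a" "coll X ?y = b" using ab img by (auto intro: f_inv_into_f)
    show "?x < ?y"
    proof (rule ccontr)
      assume "\<not> ?x < ?y"
      then have "?y \<le> ?x" by simp
      then have "b \<le> a" using coll_gt[of ?y X ?x] xX ca by (cases "?y = ?x") (auto simp: less_imp_le)
      with ab show False by simp
    qed
  qed
  ultimately show ?thesis using gk unfolding ordertype_is_def by blast
qed
lemma cf_le_ot: "unbounded_in A b \<Longrightarrow> ordertype_is A g \<Longrightarrow> cf b \<le> g"
  unfolding cf_def by (rule Least_le) blast

lemma cf_le:
  assumes U: "unbounded_in Y b" and L: "Y \<lesssim> below k"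
  shows "cf b \<le> k"
proof (cases "Y = {}")
  case True
  obtain g where "g \<le> k" "ordertype_is {} g" using ordertype_exists[of "{}" k] by auto
  then show ?thesis using cf_le_ot[of Y b g] U True by simp
next
  case False
  obtain h where h: "inj_on h Y" "h ` Y \<subseteq> below k" using L unfolding lepoll_def by blast
  define s where "s = inv_into Y h"
  define K where "K = h ` Y"
  have sK: "\<And>\<xi>. \<xi> \<in> K \<Longrightarrow> s \<xi> \<in> Y" unfolding s_def K_def by (auto intro: inv_into_into)
  have sh: "\<And>y. y \<in> Y \<Longrightarrow> s (h y) = y" unfolding s_def using h(1) by simp
  define R where "R = {\<xi>\<in>K. \<forall>\<eta>\<in>K. \<eta> < \<xi> \<longrightarrow> s \<eta> < s \<xi>}"
  have RK: "R \<subseteq> below k" using h unfolding R_def K_def by auto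
  obtain g e where g: "g \<le> k" and e: "bij_betw e (below g) R" "strict_mono_on (below g) e"
    using ordertype_exists[OF RK] unfolding ordertype_is_def by blast
  have smR: "strict_mono_on R s"
    by (rule strict_mono_onI) (auto simp: R_def)
  have injs: "inj_on s R" using smR by (rule strict_mono_on_imp_inj_on)
  have bij: "bij_betw (s \<circ> e) (below g) (s ` R)"
    using e(1) injs by (meson bij_betw_imageI bij_betw_trans)
  have sm: "strict_mono_on (below g) (s \<circ> e)"
  proof (rule strict_mono_onI)
    fix a b assume "a \<in> below g" "b \<in> below g" "a < b"
    then have "e a \<in> R" "e b \<in> R" "e a < e b" using e bij_betwE strict_mono_onD by metis+
    then show "(s \<circ> e) a < (s \<circ> e) b" using smR strict_mono_onD by fastforce
  qed
  have ub: "unbounded_in (s ` R) b"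
    unfolding unbounded_in_def
  proof
    show "s ` R \<subseteq> below b" using U sK unfolding unbounded_in_def R_def by blast
  next
    show "\<forall>x<b. \<exists>a\<in>s ` R. x \<le> a"
    proof (intro allI impI)
      fix x assume "x < b"
      then obtain y where y: "y \<in> Y" "x \<le> y" using U unfolding unbounded_in_def by blast
      define \<xi> where "\<xi> = (LEAST \<xi>. \<xi> \<in> K \<and> x \<le> s \<xi>)"
      have c: "h y \<in> K \<and> x \<le> s (h y)" using y sh unfolding K_def by auto
      have xi: "\<xi> \<in> K \<and> x \<le> s \<xi>" unfolding \<xi>_def by (rule LeastI[of _ "h y"]) (rule c)
      have "\<xi> \<in> R"
        unfolding R_def
      proof (intro CollectI conjI ballI impI)
        show "\<xi> \<in> K" using xi by blast
        fix \<eta> assume "\<eta> \<in> K" "\<eta> < \<xi>"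
        then have "\<not> (x \<le> s \<eta>)" unfolding \<xi>_def using not_less_Least by blast
        then show "s \<eta> < s \<xi>" using xi by (meson le_less_trans not_le)
      qed
      then show "\<exists>a\<in>s ` R. x \<le> a" using xi by blast
    qed
  qed
  have "cf b \<le> g" by (rule cf_le_ot[OF ub]) (unfold ordertype_is_def, use bij sm in blast)
  then show ?thesis using g by simp
qed

lemma reg_bound:
  assumes r: "regular_cardinal mu" and Y: "Y \<subseteq> below mu" and L: "Y \<lesssim> below k" and km: "k < mu"
  shows "\<exists>y<mu. \<forall>x\<in>Y. x < y"
proof (rule ccontr)
  assume "\<not> ?thesis"
  then have "\<forall>y<mu. \<exists>x\<in>Y. y \<le> x" by (meson not_le)
  then have "unbounded_in Y mu" using Y unfolding unbounded_in_def by blast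
  then have "cf mu \<le> k" using L by (rule cf_le)
  with r km show False unfolding regular_cardinal_def by simp
qed

lemma lt_star_trans: "lt_star k f g \<Longrightarrow> lt_star k g h \<Longrightarrow> lt_star k f h"
  unfolding lt_star_def
proof -
  assume "\<exists>j<k. \<forall>i. j \<le> i \<and> i < k \<longrightarrow> f i < g i" "\<exists>j<k. \<forall>i. j \<le> i \<and> i < k \<longrightarrow> g i < h i"
  then obtain j1 j2 where "j1 < k" "\<forall>i. j1 \<le> i \<and> i < k \<longrightarrow> f i < g i"
     "j2 < k" "\<forall>i. j2 \<le> i \<and> i < k \<longrightarrow> g i < h i" by blast
  then show "\<exists>j<k. \<forall>i. j \<le> i \<and> i < k \<longrightarrow> f i < h i"
    by (intro exI[of _ "max j1 j2"]) (auto intro: less_trans)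
qed

lemma good_point_cong:
  assumes "\<And>g. g < b \<Longrightarrow> F g = G g" and "good_point k F b"
  shows "good_point k G b"
proof -
  from assms(2) obtain A j where A: "unbounded_in A b" "ordertype_is A (cf b)" "j < k"
    "\<forall>i. j \<le> i \<and> i < k \<longrightarrow> (\<forall>g\<in>A. \<forall>g'\<in>A. g < g' \<longrightarrow> F g i < F g' i)"
    unfolding good_point_def by blast
  have "\<forall>g\<in>A. F g = G g" using A(1) assms(1) unfolding unbounded_in_def below_def by blast
  then show ?thesis unfolding good_point_def using A by (intro exI[of _ A] exI[of _ j]) auto
qed

definition al :: "('o::wellorder \<rightharpoonup> 'b) \<Rightarrow> 'o" where
  "al p = (THE a. dom p = {b. b \<le> a})"

lemma al_eq: "dom p = {b. b \<le> a} \<Longrightarrow> al p = a"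
  unfolding al_def
  by (rule the_equality) (auto intro: antisym simp: set_eq_iff)

lemma lepoll_ordLeq: "A \<lesssim> B \<longleftrightarrow> (card_of A, card_of B) \<in> ordLeq"
  by (simp add: lepoll_def card_of_ordLeq[symmetric])

lemma UN_lepoll_inf:
  assumes "infinite B" "I \<lesssim> B" "\<forall>i\<in>I. A i \<lesssim> B"
  shows "(\<Union>i\<in>I. A i) \<lesssim> B"
  using assms unfolding lepoll_ordLeq by (intro card_of_UNION_ordLeq_infinite) auto

lemma GforceD:
  assumes "p \<in> Gforce lmb \<kappa> lam"
  shows "below (al p) \<lesssim> below lmb" "dom p = {\<beta>. \<beta> \<le> al p}"
    "\<And>\<beta>. \<beta> \<le> al p \<Longrightarrow> the (p \<beta>) \<in> (\<Pi>\<^sub>E i\<in>below \<kappa>. below (lam i))"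
    "\<And>\<beta> \<gamma>. \<beta> \<le> al p \<Longrightarrow> \<gamma> < \<beta> \<Longrightarrow> lt_star \<kappa> (the (p \<gamma>)) (the (p \<beta>))"
    "\<And>\<beta>. \<beta> \<le> al p \<Longrightarrow> \<kappa> < cf \<beta> \<Longrightarrow> good_point \<kappa> (\<lambda>\<gamma>. the (p \<gamma>)) \<beta>"
proof -
  from assms obtain \<alpha> where a: "below \<alpha> \<lesssim> below lmb" "dom p = {\<beta>. \<beta> \<le> \<alpha>}"
     "\<forall>\<beta>\<le>\<alpha>.
           the (p \<beta>) \<in> (\<Pi>\<^sub>E i\<in>below \<kappa>. below (lam i)) \<and>
           (\<forall>\<gamma><\<beta>. lt_star \<kappa> (the (p \<gamma>)) (the (p \<beta>))) \<and>
           (\<kappa> < cf \<beta> \<longrightarrow> good_point \<kappa> (\<lambda>\<gamma>. the (p \<gamma>)) \<beta>)"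
    unfolding Gforce_def by blast
  have e: "al p = \<alpha>" using a(2) by (rule al_eq)
  show "below (al p) \<lesssim> below lmb" "dom p = {\<beta>. \<beta> \<le> al p}" using a e by auto
  show "\<And>\<beta>. \<beta> \<le> al p \<Longrightarrow> the (p \<beta>) \<in> (\<Pi>\<^sub>E i\<in>below \<kappa>. below (lam i))"
    "\<And>\<beta> \<gamma>. \<beta> \<le> al p \<Longrightarrow> \<gamma> < \<beta> \<Longrightarrow> lt_star \<kappa> (the (p \<gamma>)) (the (p \<beta>))"
    "\<And>\<beta>. \<beta> \<le> al p \<Longrightarrow> \<kappa> < cf \<beta> \<Longrightarrow> good_point \<kappa> (\<lambda>\<gamma>. the (p \<gamma>)) \<beta>"
    using a(3) e by auto
qed

theorem proposition2p9:
  fixes lmb \<kappa> :: "'o::wellorder" and lam :: "'o \<Rightarrow> 'o"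
  assumes big: "\<exists>x::'o. below lmb \<prec> below x"
    and sing: "singular_cardinal lmb"
    and cof: "cf lmb = \<kappa>"
    and incr: "\<forall>i j. i < j \<and> j < \<kappa> \<longrightarrow> lam i < lam j"
    and reg: "\<forall>i<\<kappa>. regular_cardinal (lam i)"
    and bnd: "\<forall>i<\<kappa>. lam i < lmb"
    and conv: "\<forall>x<lmb. \<exists>i<\<kappa>. x < lam i"
  shows "kappa_plus_directed_closed \<kappa> (Gforce lmb \<kappa> lam)"
  unfolding kappa_plus_directed_closed_def
proof (intro allI impI)
  let ?P = "Gforce lmb \<kappa> lam"
  fix D assume "D \<subseteq> ?P \<and> D \<lesssim> below \<kappa> \<and> (\<forall>p\<in>D. \<forall>q\<in>D. \<exists>r\<in>D. ext_le r p \<and> ext_le r q)"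
  then have DP: "D \<subseteq> ?P" and DL: "D \<lesssim> below \<kappa>" and dir: "\<forall>p\<in>D. \<forall>q\<in>D. \<exists>r\<in>D. ext_le r p \<and> ext_le r q"
    by auto
  have klmb: "\<kappa> < lmb" using sing cof unfolding singular_cardinal_def by simp
  have inflmb: "infinite (below lmb)" using sing unfolding singular_cardinal_def by simp
  from big obtain x0 :: 'o where x0: "below lmb \<prec> below x0" by (elim exE)
  have compat: "p \<beta> = q \<beta>" if pq: "p \<in> D" "q \<in> D" "\<beta> \<in> dom p" "\<beta> \<in> dom q" for p q \<beta>
  proof -
    obtain r where r: "ext_le r p" "ext_le r q" using dir[rule_format, OF pq(1) pq(2)] by blast
    have "p \<beta> = (r |` dom p) \<beta>" "q \<beta> = (r |` dom q) \<beta>"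
      using r unfolding ext_le_def by simp_all
    then show ?thesis using pq(3,4) by simp
  qed
  have domD: "dom p = {\<beta>. \<beta> \<le> al p}" if "p \<in> D" for p using GforceD(2) DP that by blast
  have alx0: "al p < x0" if "p \<in> D" for p
  proof (rule ccontr)
    assume "\<not> al p < x0"
    then have "below x0 \<subseteq> below (al p)" unfolding below_def by auto
    then have "below x0 \<lesssim> below lmb" using GforceD(1) DP that
      by (meson lepoll_trans subset_eq subset_imp_lepoll)
    then show False using x0 unfolding lesspoll_def by (meson lepoll_antisym)
  qed
  define \<delta> where "\<delta> = (LEAST z. \<forall>p\<in>D. al p < z)"
  have aldelta: "\<forall>p\<in>D. al p < \<delta>" unfolding \<delta>_def by (rule LeastI[of _ x0]) (use alx0 in blast)
  have below_delta: "\<exists>p\<in>D. z \<le> al p" if "z < \<delta>" for z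
  proof (rule ccontr)
    assume "\<not> ?thesis"
    then have "\<forall>p\<in>D. al p < z" by (meson not_le)
    then have "\<delta> \<le> z" unfolding \<delta>_def by (rule Least_le)
    with that show False by simp
  qed
  have cfd: "cf \<delta> \<le> \<kappa>"
  proof (rule cf_le)
    show "unbounded_in (al ` D) \<delta>" unfolding unbounded_in_def below_def
      using aldelta below_delta by blast
    show "al ` D \<lesssim> below \<kappa>" using image_lepoll DL lepoll_trans by blast
  qed
  have bd: "below \<delta> \<lesssim> below lmb"
  proof -
    have "below \<delta> = (\<Union>p\<in>D. dom p)"
      using below_delta aldelta domD unfolding below_def by (auto intro: le_less_trans)
    moreover have "(\<Union>p\<in>D. dom p) \<lesssim> below lmb"
    proof (rule UN_lepoll_inf[OF inflmb])
      have "below \<kappa> \<subseteq> below lmb" using klmb unfolding below_def by auto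
      then show "D \<lesssim> below lmb" using DL by (meson lepoll_trans subset_imp_lepoll)
      show "\<forall>p\<in>D. dom p \<lesssim> below lmb"
      proof
        fix p assume p: "p \<in> D"
        have dp: "dom p = insert (al p) (below (al p))" using domD[OF p] unfolding below_def by auto
        have bl: "below (al p) \<lesssim> below lmb" using GforceD(1) DP p by blast
        show "dom p \<lesssim> below lmb"
        proof (cases "finite (below (al p))")
          case True then show ?thesis using dp finite_lepoll_infinite[OF inflmb] by (metis finite_insert)
        next
          case False then show ?thesis using dp infinite_insert_lepoll bl lepoll_trans by metis
        qed
      qed
    qed
    ultimately show ?thesis by simp
  qed
  define h where "h p = the (p (al p))" for p :: "'o \<rightharpoonup> ('o \<Rightarrow> 'o)"
  have hP: "h p \<in> (\<Pi>\<^sub>E i\<in>below \<kappa>. below (lam i))" if "p \<in> D" for p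
    unfolding h_def using GforceD(3) DP that by blast
  define f where "f = (\<lambda>i. if i < \<kappa> then (LEAST y. \<kappa> < lam i \<longrightarrow> (\<forall>p\<in>D. h p i < y)) else undefined)"
  have fi: "f i < lam i \<and> (\<kappa> < lam i \<longrightarrow> (\<forall>p\<in>D. h p i < f i))" if "i < \<kappa>" for i
  proof -
    have ne: "\<exists>y. y < lam i" using reg that unfolding regular_cardinal_def below_def
      by (metis empty_Collect_eq finite.emptyI)
    have "\<exists>y<lam i. \<kappa> < lam i \<longrightarrow> (\<forall>p\<in>D. h p i < y)"
    proof (cases "\<kappa> < lam i")
      case True
      have "\<exists>y<lam i. \<forall>x\<in>(\<lambda>p. h p i) ` D. x < y"
      proof (rule reg_bound)
        show "regular_cardinal (lam i)" using reg that by blast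
        show "(\<lambda>p. h p i) ` D \<subseteq> below (lam i)" using hP that unfolding below_def
          by (auto simp: PiE_iff below_def)
        show "(\<lambda>p. h p i) ` D \<lesssim> below \<kappa>" using image_lepoll DL lepoll_trans by blast
      qed (rule True)
      then show ?thesis by auto
    next
      case False then show ?thesis using ne by blast
    qed
    then obtain y where y: "y < lam i" "\<kappa> < lam i \<longrightarrow> (\<forall>p\<in>D. h p i < y)" by blast
    have "f i \<le> y" unfolding f_def using that by (simp add: Least_le y(2))
    moreover have "\<kappa> < lam i \<longrightarrow> (\<forall>p\<in>D. h p i < (LEAST y. \<kappa> < lam i \<longrightarrow> (\<forall>p\<in>D. h p i < y)))"
      by (rule LeastI[of _ y], rule y(2))
    then have "\<kappa> < lam i \<longrightarrow> (\<forall>p\<in>D. h p i < f i)" unfolding f_def using that by simp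
    ultimately show ?thesis using y(1) by simp
  qed
  have fP: "f \<in> (\<Pi>\<^sub>E i\<in>below \<kappa>. below (lam i))"
    using fi unfolding PiE_iff below_def
  proof (intro conjI ballI)
    show "f \<in> extensional {y. y < \<kappa>}" unfolding f_def extensional_def by simp
  qed auto
  obtain j0 where j0: "j0 < \<kappa>" "\<kappa> < lam j0" using conv klmb by blast
  have hf: "lt_star \<kappa> (h p) f" if "p \<in> D" for p
    unfolding lt_star_def
  proof (intro exI[of _ j0] conjI allI impI)
    show "j0 < \<kappa>" by (rule j0)
    fix i assume i: "j0 \<le> i \<and> i < \<kappa>"
    have "\<kappa> < lam i" using j0 i incr by (metis order_le_less less_trans)
    then show "h p i < f i" using fi i that by blast
  qed
  define pick where "pick \<beta> = (SOME p. p \<in> D \<and> \<beta> \<le> al p)" for \<beta>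
  have pick: "pick \<beta> \<in> D \<and> \<beta> \<le> al (pick \<beta>)" if "\<beta> < \<delta>" for \<beta>
    unfolding pick_def using below_delta[OF that] by (metis (mono_tags, lifting) someI_ex)
  define r where "r \<beta> = (if \<beta> < \<delta> then pick \<beta> \<beta> else if \<beta> = \<delta> then Some f else None)" for \<beta>
  have r_agree: "r \<beta> = p \<beta>" if "p \<in> D" "\<beta> \<le> al p" for p \<beta>
  proof -
    have bd': "\<beta> < \<delta>" using that aldelta le_less_trans by blast
    then have "r \<beta> = pick \<beta> \<beta>" unfolding r_def by simp
    also have "\<dots> = p \<beta>" using compat[of "pick \<beta>" p \<beta>] pick[OF bd'] that domD by blast
    finally show ?thesis .
  qed
  have rd: "r \<delta> = Some f" unfolding r_def by simp
  have domr: "dom r = {\<beta>. \<beta> \<le> \<delta>}"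
  proof (rule set_eqI)
    fix \<beta>
    show "\<beta> \<in> dom r \<longleftrightarrow> \<beta> \<in> {\<beta>. \<beta> \<le> \<delta>}"
    proof (cases "\<beta> < \<delta>")
      case True
      then have "r \<beta> = pick \<beta> \<beta>" "pick \<beta> \<beta> \<noteq> None" using pick[OF True] domD by (auto simp: r_def)
      then show ?thesis using True by auto
    next
      case False then show ?thesis by (auto simp: r_def split: if_splits)
    qed
  qed
  have rP: "r \<in> ?P"
    unfolding Gforce_def
  proof (intro CollectI exI[of _ \<delta>] conjI)
    show "below \<delta> \<lesssim> below lmb" by (rule bd)
    show "dom r = {\<beta>. \<beta> \<le> \<delta>}" by (rule domr)
    show "\<forall>\<beta>\<le>\<delta>. the (r \<beta>) \<in> (\<Pi>\<^sub>E i\<in>below \<kappa>. below (lam i)) \<and>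
           (\<forall>\<gamma><\<beta>. lt_star \<kappa> (the (r \<gamma>)) (the (r \<beta>))) \<and>
           (\<kappa> < cf \<beta> \<longrightarrow> good_point \<kappa> (\<lambda>\<gamma>. the (r \<gamma>)) \<beta>)"
  proof (rule allI, rule impI, intro conjI)
    fix \<beta> assume b: "\<beta> \<le> \<delta>"
    show "the (r \<beta>) \<in> (\<Pi>\<^sub>E i\<in>below \<kappa>. below (lam i))"
    proof (cases "\<beta> < \<delta>")
      case True
      then show ?thesis using pick[OF True] r_agree GforceD(3) DP by (metis subsetD)
    next
      case False then show ?thesis using b rd fP by simp
    qed
    show "\<forall>\<gamma><\<beta>. lt_star \<kappa> (the (r \<gamma>)) (the (r \<beta>))"
    proof (intro allI impI)
      fix \<gamma> assume g: "\<gamma> < \<beta>"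
      show "lt_star \<kappa> (the (r \<gamma>)) (the (r \<beta>))"
      proof (cases "\<beta> < \<delta>")
        case True
        let ?p = "pick \<beta>"
        have "r \<beta> = ?p \<beta>" "r \<gamma> = ?p \<gamma>" using pick[OF True] r_agree g by auto
        then show ?thesis using GforceD(4)[of ?p] pick[OF True] DP g by auto
      next
        case False
        then have bdl: "\<beta> = \<delta>" using b by simp
        then have gd: "\<gamma> < \<delta>" using g by simp
        let ?p = "pick \<gamma>"
        have pD: "?p \<in> D" and gp: "\<gamma> \<le> al ?p" using pick[OF gd] by auto
        have rg: "r \<gamma> = ?p \<gamma>" using r_agree pD gp by blast
        have "lt_star \<kappa> (the (?p \<gamma>)) f"
        proof (cases "\<gamma> = al ?p")
          case True
          then show ?thesis using hf[OF pD] unfolding h_def by simp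
        next
          case False
          then have "lt_star \<kappa> (the (?p \<gamma>)) (h ?p)"
            unfolding h_def using GforceD(4)[of ?p] DP pD gp by auto
          then show ?thesis using hf[OF pD] lt_star_trans by blast
        qed
        then show ?thesis using rg rd bdl by simp
      qed
    qed
    show "\<kappa> < cf \<beta> \<longrightarrow> good_point \<kappa> (\<lambda>\<gamma>. the (r \<gamma>)) \<beta>"
    proof
      assume kc: "\<kappa> < cf \<beta>"
      then have "\<beta> \<noteq> \<delta>" using cfd by auto
      then have bl: "\<beta> < \<delta>" using b by simp
      let ?p = "pick \<beta>"
      have "good_point \<kappa> (\<lambda>\<gamma>. the (?p \<gamma>)) \<beta>" using GforceD(5)[of ?p] pick[OF bl] DP kc by auto
      then show "good_point \<kappa> (\<lambda>\<gamma>. the (r \<gamma>)) \<beta>"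
        by (rule good_point_cong[rotated]) (use r_agree pick[OF bl] in auto)
    qed
  qed
  qed
  show "\<exists>r\<in>?P. \<forall>p\<in>D. ext_le r p"
  proof (intro bexI[OF _ rP] ballI)
    fix p assume p: "p \<in> D"
    show "ext_le r p" unfolding ext_le_def
    proof (rule ext)
      fix \<beta>
      show "(r |` dom p) \<beta> = p \<beta>"
        using r_agree[OF p] domD[OF p] by (cases "\<beta> \<in> dom p") (auto simp: restrict_map_def)
    qed
  qed
qed

end
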